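(* Let $\Omega\subseteq\mathbb{R}^n$ be open. (i) The set $\mathbb{G}(\Omega)$ of all D-continuous interval functions on $\Omega$ is order complete with respect to $\le$ (every subset has a supremum and an infimum in $\mathbb{G}(\Omega)$). (ii) Each of the following sets is Dedekind order complete with respect to $\le$: the set $\mathbb{G}_{bd}(\Omega)$ of all bounded D-continuous interval functions; the set $\mathbb{G}_{ft}(\Omega)$ of all finite D-continuous interval functions; the set $\mathbb{G}_{nf}(\Omega)$ of all nearly finite D-continuous interval functions.
   Context: $\overline{\mathbb{R}}=\mathbb{R}\cup\{\pm\infty\}$, $\mathbb{I}\overline{\mathbb{R}}$ is the set of closed intervals $[\underline a,\overline a]$ with $\underline a\le\overline a$ in $\overline{\mathbb{R}}$, $a\in\overline{\mathbb{R}}$ identified with $[a,a]$. $\mathbb{A}(X)$ is the set of functions $X\to\mathbb{I}\overline{\mathbb{R}}$. Order: $[\underline a,\overline a]\le[\underline b,\overline b]$ iff $\underline a\le\underline b$ and $\overline a\le\overline b$; $f\le g$ iff $f(x)\le g(x)$ for all $x$. $B_\delta(x)=\{y\in\Omega:\|x-y\|<\delta\}$. For dense $D\subseteq\Omega$ and $f\in\mathbb{A}(D)$: $I(D,\Omega,f)(x)=\sup_{\delta>0}\inf\{z\in f(y):y\in B_\delta(x)\cap D\}$, $S(D,\Omega,f)(x)=\inf_{\delta>0}\sup\{z\in f(y):y\in B_\delta(x)\cap D\}$, $F(D,\Omega,f)(x)=[I(D,\Omega,f)(x),S(D,\Omega,f)(x)]$. $f\in\mathbb{A}(\Omega)$ is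 D-continuous if $F(D,\Omega,f)=f$ for every dense $D\subseteq\Omega$. $f$ is bounded if there is $M\in\mathbb{R}$ with $f(x)\subseteq[-M,M]$ for all $x$; finite if $f(x)$ is a finite interval (both endpoints in $\mathbb{R}$) for all $x\in\Omega$; nearly finite if there is an open dense $D\subseteq\Omega$ with $f(x)$ finite for all $x\in D$. A poset is Dedekind order complete if every nonempty subset bounded above has a supremum in it and every nonempty subset bounded below has an infimum in it. *)

theory Defs
  imports "HOL-Analysis.Analysis"
begin

text \<open>An extended-real interval [lo, hi] is a pair (lo, hi) with lo \<le> hi.
  An interval function on X is a function into such pairs; outside X it is
  fixed to be undefined (extensional), so that the pointwise order on X is
  antisymmetric.\<close>

type_synonym ivl = "ereal \<times> ereal"

definition ivl_funs :: "'a set \<Rightarrow> ('a \<Rightarrow> ivl) set" where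
  "ivl_funs X = {f. (\<forall>x\<in>X. fst (f x) \<le> snd (f x)) \<and> (\<forall>x. x \<notin> X \<longrightarrow> f x = undefined)}"

definition ivl_le :: "'a set \<Rightarrow> ('a \<Rightarrow> ivl) \<Rightarrow> ('a \<Rightarrow> ivl) \<Rightarrow> bool" where
  "ivl_le X f g \<longleftrightarrow> (\<forall>x\<in>X. fst (f x) \<le> fst (g x) \<and> snd (f x) \<le> snd (g x))"

definition Bdelta :: "('a::metric_space) set \<Rightarrow> real \<Rightarrow> 'a \<Rightarrow> 'a set" where
  "Bdelta \<Omega> \<delta> x = {y \<in> \<Omega>. dist x y < \<delta>}"

definition vals :: "('a::metric_space) set \<Rightarrow> 'a set \<Rightarrow> ('a \<Rightarrow> ivl) \<Rightarrow> real \<Rightarrow> 'a \<Rightarrow> ereal set" where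
  "vals D \<Omega> f \<delta> x = {z. \<exists>y \<in> Bdelta \<Omega> \<delta> x \<inter> D. fst (f y) \<le> z \<and> z \<le> snd (f y)}"

definition I_env :: "('a::metric_space) set \<Rightarrow> 'a set \<Rightarrow> ('a \<Rightarrow> ivl) \<Rightarrow> 'a \<Rightarrow> ereal" where
  "I_env D \<Omega> f x = (SUP \<delta>\<in>{0<..}. Inf (vals D \<Omega> f \<delta> x))"

definition S_env :: "('a::metric_space) set \<Rightarrow> 'a set \<Rightarrow> ('a \<Rightarrow> ivl) \<Rightarrow> 'a \<Rightarrow> ereal" where
  "S_env D \<Omega> f x = (INF \<delta>\<in>{0<..}. Sup (vals D \<Omega> f \<delta> x))"

definition F_env :: "('a::metric_space) set \<Rightarrow> 'a set \<Rightarrow> ('a \<Rightarrow> ivl) \<Rightarrow> 'a \<Rightarrow> ivl" where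
  "F_env D \<Omega> f x = (if x \<in> \<Omega> then (I_env D \<Omega> f x, S_env D \<Omega> f x) else undefined)"

definition dense_in :: "('a::topological_space) set \<Rightarrow> 'a set \<Rightarrow> bool" where
  "dense_in D \<Omega> \<longleftrightarrow> D \<subseteq> \<Omega> \<and> \<Omega> \<subseteq> closure D"

definition D_continuous :: "('a::metric_space) set \<Rightarrow> ('a \<Rightarrow> ivl) \<Rightarrow> bool" where
  "D_continuous \<Omega> f \<longleftrightarrow> f \<in> ivl_funs \<Omega> \<and> (\<forall>D. dense_in D \<Omega> \<longrightarrow> F_env D \<Omega> f = f)"

definition G_set :: "('a::metric_space) set \<Rightarrow> ('a \<Rightarrow> ivl) set" where
  "G_set \<Omega> = {f. D_continuous \<Omega> f}"

definition ivl_bounded :: "'a set \<Rightarrow> ('a \<Rightarrow> ivl) \<Rightarrow> bool" where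
  "ivl_bounded \<Omega> f \<longleftrightarrow> (\<exists>M::real. \<forall>x\<in>\<Omega>. - ereal M \<le> fst (f x) \<and> snd (f x) \<le> ereal M)"

definition finite_ivl :: "ivl \<Rightarrow> bool" where
  "finite_ivl a \<longleftrightarrow> \<bar>fst a\<bar> \<noteq> \<infinity> \<and> \<bar>snd a\<bar> \<noteq> \<infinity>"

definition ivl_finite :: "'a set \<Rightarrow> ('a \<Rightarrow> ivl) \<Rightarrow> bool" where
  "ivl_finite \<Omega> f \<longleftrightarrow> (\<forall>x\<in>\<Omega>. finite_ivl (f x))"

definition ivl_nearly_finite :: "('a::topological_space) set \<Rightarrow> ('a \<Rightarrow> ivl) \<Rightarrow> bool" where
  "ivl_nearly_finite \<Omega> f \<longleftrightarrow> (\<exists>D. open D \<and> dense_in D \<Omega> \<and> (\<forall>x\<in>D. finite_ivl (f x)))"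

definition is_sup_in :: "('b \<Rightarrow> 'b \<Rightarrow> bool) \<Rightarrow> 'b set \<Rightarrow> 'b set \<Rightarrow> 'b \<Rightarrow> bool" where
  "is_sup_in le P S s \<longleftrightarrow> s \<in> P \<and> (\<forall>f\<in>S. le f s) \<and> (\<forall>u\<in>P. (\<forall>f\<in>S. le f u) \<longrightarrow> le s u)"

definition is_inf_in :: "('b \<Rightarrow> 'b \<Rightarrow> bool) \<Rightarrow> 'b set \<Rightarrow> 'b set \<Rightarrow> 'b \<Rightarrow> bool" where
  "is_inf_in le P S s \<longleftrightarrow> s \<in> P \<and> (\<forall>f\<in>S. le s f) \<and> (\<forall>u\<in>P. (\<forall>f\<in>S. le u f) \<longrightarrow> le u s)"

definition order_complete :: "('b \<Rightarrow> 'b \<Rightarrow> bool) \<Rightarrow> 'b set \<Rightarrow> bool" where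
  "order_complete le P \<longleftrightarrow>
     (\<forall>S. S \<subseteq> P \<longrightarrow> (\<exists>s. is_sup_in le P S s) \<and> (\<exists>s. is_inf_in le P S s))"

definition dedekind_complete :: "('b \<Rightarrow> 'b \<Rightarrow> bool) \<Rightarrow> 'b set \<Rightarrow> bool" where
  "dedekind_complete le P \<longleftrightarrow>
     (\<forall>S. S \<subseteq> P \<and> S \<noteq> {} \<and> (\<exists>u\<in>P. \<forall>f\<in>S. le f u) \<longrightarrow> (\<exists>s. is_sup_in le P S s)) \<and>
     (\<forall>S. S \<subseteq> P \<and> S \<noteq> {} \<and> (\<exists>l\<in>P. \<forall>f\<in>S. le l f) \<longrightarrow> (\<exists>s. is_inf_in le P S s))"

end

theory Submission
  imports Defs
begin

definition lenv :: "('a::metric_space) set \<Rightarrow> 'a set \<Rightarrow> ('a \<Rightarrow> ereal) \<Rightarrow> 'a \<Rightarrow> ereal" where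
  "lenv D \<Omega> g x = (SUP \<delta>\<in>{0<..}. INF y\<in>Bdelta \<Omega> \<delta> x \<inter> D. g y)"

definition Lset :: "('a::metric_space) set \<Rightarrow> ('a \<Rightarrow> ereal) set" where
  "Lset \<Omega> = {g. \<forall>D. dense_in D \<Omega> \<longrightarrow> (\<forall>x\<in>\<Omega>. lenv D \<Omega> g x = g x)}"

definition opsub :: "('a::metric_space) set \<Rightarrow> 'a set set" where
  "opsub V = {U. open U \<and> U \<noteq> {} \<and> U \<subseteq> V}"

definition mm :: "('a::metric_space \<Rightarrow> ereal) \<Rightarrow> 'a set \<Rightarrow> ereal" where
  "mm g V = (INF U\<in>opsub V. SUP y\<in>U. g y)"

definition Psi :: "('a::metric_space) set \<Rightarrow> ('a \<Rightarrow> ereal) \<Rightarrow> 'a \<Rightarrow> ereal" where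
  "Psi \<Omega> g x = (SUP \<delta>\<in>{0<..}. mm g (Bdelta \<Omega> \<delta> x))"

lemma Bdelta_open: "open \<Omega> \<Longrightarrow> open (Bdelta \<Omega> \<delta> x)"
proof -
  assume "open \<Omega>"
  have "Bdelta \<Omega> \<delta> x = \<Omega> \<inter> ball x \<delta>" by (auto simp: Bdelta_def ball_def)
  then show ?thesis using \<open>open \<Omega>\<close> by auto
qed

lemma Bdelta_mono: "\<delta> \<le> \<epsilon> \<Longrightarrow> Bdelta \<Omega> \<delta> x \<subseteq> Bdelta \<Omega> \<epsilon> x"
  by (auto simp: Bdelta_def)

lemma Bdelta_center: "x \<in> \<Omega> \<Longrightarrow> 0 < \<delta> \<Longrightarrow> x \<in> Bdelta \<Omega> \<delta> x"
  by (auto simp: Bdelta_def)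

lemma Bdelta_sub: "Bdelta \<Omega> \<delta> x \<subseteq> \<Omega>"
  by (auto simp: Bdelta_def)

lemma Bdelta_half: "y \<in> Bdelta \<Omega> (\<delta>/2) x \<Longrightarrow> Bdelta \<Omega> (\<delta>/2) y \<subseteq> Bdelta \<Omega> \<delta> x"
  apply (auto simp: Bdelta_def)
  by (smt (verit) dist_triangle)

lemma mm_antimono: "V \<subseteq> W \<Longrightarrow> mm g W \<le> mm g V"
  unfolding mm_def by (rule INF_superset_mono) (auto simp: opsub_def)

lemma mm_le: "U \<in> opsub V \<Longrightarrow> mm g V \<le> (SUP y\<in>U. g y)"
  unfolding mm_def by (rule INF_lower)

lemma dense_meets: "dense_in D \<Omega> \<Longrightarrow> open U \<Longrightarrow> U \<noteq> {} \<Longrightarrow> U \<subseteq> \<Omega> \<Longrightarrow> U \<inter> D \<noteq> {}"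
  unfolding dense_in_def using open_Int_closure_eq_empty by blast

lemma dense_self: "dense_in \<Omega> \<Omega>"
  by (auto simp: dense_in_def closure_subset)

lemma Psi_Lset:
  assumes "open \<Omega>"
  shows "Psi \<Omega> g \<in> Lset \<Omega>"
  unfolding Lset_def
proof (intro CollectI allI impI ballI)
  fix D x assume D: "dense_in D \<Omega>" and x: "x \<in> \<Omega>"
  show "lenv D \<Omega> (Psi \<Omega> g) x = Psi \<Omega> g x"
  proof (rule antisym)
    show "lenv D \<Omega> (Psi \<Omega> g) x \<le> Psi \<Omega> g x"
      unfolding lenv_def
    proof (rule SUP_least)
      fix \<delta> :: real assume "\<delta> \<in> {0<..}"
      then have dp: "0 < \<delta>" by simp
      show "(INF y\<in>Bdelta \<Omega> \<delta> x \<inter> D. Psi \<Omega> g y) \<le> Psi \<Omega> g x"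
      proof (rule dense_ge)
        fix c assume c: "Psi \<Omega> g x < c"
        have "mm g (Bdelta \<Omega> \<delta> x) \<le> Psi \<Omega> g x"
          unfolding Psi_def using dp by (auto intro: SUP_upper)
        with c have "mm g (Bdelta \<Omega> \<delta> x) < c" by simp
        then obtain U where U: "U \<in> opsub (Bdelta \<Omega> \<delta> x)" and Oc: "(SUP y\<in>U. g y) < c"
          unfolding mm_def by (auto simp: INF_less_iff)
        have "U \<subseteq> \<Omega>" using U Bdelta_sub[of \<Omega> \<delta> x] by (auto simp: opsub_def)
        then have "U \<inter> D \<noteq> {}" using dense_meets[OF D, of U] U by (auto simp: opsub_def)
        then obtain y where y: "y \<in> U" "y \<in> D" by blast
        have "Psi \<Omega> g y \<le> (SUP y\<in>U. g y)"
          unfolding Psi_def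
        proof (rule SUP_least)
          fix \<epsilon> :: real assume "\<epsilon> \<in> {0<..}"
          then have ep: "0 < \<epsilon>" by simp
          have "Bdelta \<Omega> \<epsilon> y \<inter> U \<in> opsub (Bdelta \<Omega> \<epsilon> y)"
          proof -
            have "y \<in> Bdelta \<Omega> \<epsilon> y" using y ep `U \<subseteq> \<Omega>` Bdelta_center[of y \<Omega> \<epsilon>] by auto
            then show ?thesis using U y Bdelta_open[OF assms, of \<epsilon> y] by (auto simp: opsub_def)
          qed
          then have "mm g (Bdelta \<Omega> \<epsilon> y) \<le> (SUP y\<in>Bdelta \<Omega> \<epsilon> y \<inter> U. g y)"
            by (rule mm_le)
          also have "\<dots> \<le> (SUP y\<in>U. g y)" by (rule SUP_subset_mono) auto
          finally show "mm g (Bdelta \<Omega> \<epsilon> y) \<le> (SUP y\<in>U. g y)" .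
        qed
        moreover have "y \<in> Bdelta \<Omega> \<delta> x \<inter> D" using U y by (auto simp: opsub_def)
        ultimately have "(INF y\<in>Bdelta \<Omega> \<delta> x \<inter> D. Psi \<Omega> g y) \<le> (SUP y\<in>U. g y)"
          by (meson INF_lower2)
        with Oc show "(INF y\<in>Bdelta \<Omega> \<delta> x \<inter> D. Psi \<Omega> g y) \<le> c" by simp
      qed
    qed
  next
    show "Psi \<Omega> g x \<le> lenv D \<Omega> (Psi \<Omega> g) x"
      unfolding Psi_def[of \<Omega> g x]
    proof (rule SUP_least)
      fix \<delta> :: real assume "\<delta> \<in> {0<..}"
      then have dp: "0 < \<delta>" by simp
      have "mm g (Bdelta \<Omega> \<delta> x) \<le> (INF y\<in>Bdelta \<Omega> (\<delta>/2) x \<inter> D. Psi \<Omega> g y)"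
      proof (rule INF_greatest)
        fix y assume y: "y \<in> Bdelta \<Omega> (\<delta>/2) x \<inter> D"
        have "mm g (Bdelta \<Omega> \<delta> x) \<le> mm g (Bdelta \<Omega> (\<delta>/2) y)"
          using Bdelta_half[of y \<Omega> \<delta> x] y by (intro mm_antimono) auto
        also have "\<dots> \<le> Psi \<Omega> g y" unfolding Psi_def using dp by (auto intro!: SUP_upper)
        finally show "mm g (Bdelta \<Omega> \<delta> x) \<le> Psi \<Omega> g y" .
      qed
      also have "\<dots> \<le> lenv D \<Omega> (Psi \<Omega> g) x" unfolding lenv_def using dp
        by (auto intro!: SUP_upper2[where i="\<delta>/2"])
      finally show "mm g (Bdelta \<Omega> \<delta> x) \<le> lenv D \<Omega> (Psi \<Omega> g) x" .
    qed
  qed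
qed

lemma Lset_self: "g \<in> Lset \<Omega> \<Longrightarrow> x \<in> \<Omega> \<Longrightarrow> lenv \<Omega> \<Omega> g x = g x"
  unfolding Lset_def using dense_self by blast

lemma Psi_lower:
  assumes a: "a \<in> Lset \<Omega>" and le: "\<forall>y\<in>\<Omega>. a y \<le> g y" and x: "x \<in> \<Omega>"
  shows "a x \<le> Psi \<Omega> g x"
proof -
  have "lenv \<Omega> \<Omega> a x \<le> Psi \<Omega> g x"
    unfolding lenv_def
  proof (rule SUP_least)
    fix \<delta> :: real assume "\<delta> \<in> {0<..}"
    then have dp: "0 < \<delta>" by simp
    have "(INF y\<in>Bdelta \<Omega> \<delta> x \<inter> \<Omega>. a y) \<le> mm g (Bdelta \<Omega> \<delta> x)"
      unfolding mm_def
    proof (rule INF_greatest)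
      fix U assume U: "U \<in> opsub (Bdelta \<Omega> \<delta> x)"
      then obtain y where y: "y \<in> U" by (auto simp: opsub_def)
      then have yB: "y \<in> Bdelta \<Omega> \<delta> x \<inter> \<Omega>" using U Bdelta_sub[of \<Omega> \<delta> x] by (auto simp: opsub_def)
      have "(INF y\<in>Bdelta \<Omega> \<delta> x \<inter> \<Omega>. a y) \<le> a y" using yB by (rule INF_lower)
      also have "\<dots> \<le> g y" using le yB by auto
      also have "\<dots> \<le> (SUP y\<in>U. g y)" using y by (rule SUP_upper)
      finally show "(INF y\<in>Bdelta \<Omega> \<delta> x \<inter> \<Omega>. a y) \<le> (SUP y\<in>U. g y)" .
    qed
    also have "\<dots> \<le> Psi \<Omega> g x" unfolding Psi_def using dp by (auto intro: SUP_upper)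
    finally show "(INF y\<in>Bdelta \<Omega> \<delta> x \<inter> \<Omega>. a y) \<le> Psi \<Omega> g x" .
  qed
  then show ?thesis using Lset_self[OF a x] by simp
qed

lemma Psi_upper:
  assumes op: "open \<Omega>" and a: "a \<in> Lset \<Omega>" and le: "\<forall>y\<in>\<Omega>. g y \<le> a y" and x: "x \<in> \<Omega>"
  shows "Psi \<Omega> g x \<le> a x"
  unfolding Psi_def
proof (rule SUP_least)
  fix \<delta> :: real assume "\<delta> \<in> {0<..}"
  then have dp: "0 < \<delta>" by simp
  show "mm g (Bdelta \<Omega> \<delta> x) \<le> a x"
  proof (rule dense_ge)
    fix c assume c: "a x < c"
    define A where "A = {y \<in> Bdelta \<Omega> \<delta> x. a y < c}"
    have "interior A \<noteq> {}"
    proof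
      assume int: "interior A = {}"
      define D where "D = \<Omega> - A"
      have "dense_in D \<Omega>"
        unfolding dense_in_def
      proof
        show "D \<subseteq> \<Omega>" by (auto simp: D_def)
        show "\<Omega> \<subseteq> closure D"
        proof
          fix z assume z: "z \<in> \<Omega>"
          show "z \<in> closure D"
            unfolding closure_approachable
          proof (intro allI impI)
            fix e :: real assume e: "0 < e"
            show "\<exists>y\<in>D. dist y z < e"
            proof (rule ccontr)
              assume "\<not> (\<exists>y\<in>D. dist y z < e)"
              then have "Bdelta \<Omega> e z \<subseteq> A" by (auto simp: D_def Bdelta_def dist_commute)
              moreover have "open (Bdelta \<Omega> e z)" using op by (rule Bdelta_open)
              moreover have "z \<in> Bdelta \<Omega> e z" using z e by (rule Bdelta_center)
              ultimately have "z \<in> interior A" by (meson interior_maximal subsetD)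
              with int show False by simp
            qed
          qed
        qed
      qed
      then have "lenv D \<Omega> a x = a x" using a x by (auto simp: Lset_def)
      moreover have "c \<le> lenv D \<Omega> a x"
      proof -
        have "c \<le> (INF y\<in>Bdelta \<Omega> \<delta> x \<inter> D. a y)"
          by (rule INF_greatest) (auto simp: D_def A_def not_less)
        also have "\<dots> \<le> lenv D \<Omega> a x" unfolding lenv_def using dp by (auto intro: SUP_upper)
        finally show ?thesis .
      qed
      ultimately show False using c by simp
    qed
    then have U: "interior A \<in> opsub (Bdelta \<Omega> \<delta> x)"
      using interior_subset[of A] by (auto simp: opsub_def A_def)
    have "mm g (Bdelta \<Omega> \<delta> x) \<le> (SUP y\<in>interior A. g y)" using U by (rule mm_le)
    also have "\<dots> \<le> c"
    proof (rule SUP_least)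
      fix y assume "y \<in> interior A"
      then have "y \<in> A" using interior_subset by blast
      then show "g y \<le> c" using le Bdelta_sub[of \<Omega> \<delta> x] by (auto simp: A_def) (meson less_imp_le order_trans subsetD)
    qed
    finally show "mm g (Bdelta \<Omega> \<delta> x) \<le> c" .
  qed
qed

lemma ereal_le_neg_swap: "(a::ereal) \<le> - b \<Longrightarrow> b \<le> - a"
  by (metis ereal_uminus_le_reorder ereal_uminus_uminus)

lemma mm_compat:
  assumes op: "open \<Omega>" and x: "x \<in> \<Omega>" and dp: "0 < \<delta>"
    and le: "\<forall>y\<in>\<Omega>. \<phi> y \<le> hh y"
    and lo: "\<forall>y\<in>\<Omega>. \<forall>t<\<phi> y. \<exists>\<epsilon>>0. \<forall>z\<in>Bdelta \<Omega> \<epsilon> y. t < \<phi> z"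
  shows "mm \<phi> (Bdelta \<Omega> \<delta> x) \<le> - mm (\<lambda>y. - hh y) (Bdelta \<Omega> \<delta> x)"
proof (rule dense_le)
  define V where "V = Bdelta \<Omega> \<delta> x"
  fix t assume t: "t < mm \<phi> (Bdelta \<Omega> \<delta> x)"
  define W where "W = {y \<in> V. t < \<phi> y}"
  have Vo: "open V" unfolding V_def using op by (rule Bdelta_open)
  have VO: "V \<subseteq> \<Omega>" unfolding V_def by (rule Bdelta_sub)
  have "open W"
    unfolding open_contains_ball
  proof
    fix y assume y: "y \<in> W"
    then have yV: "y \<in> V" and ty: "t < \<phi> y" by (auto simp: W_def)
    obtain e1 where e1: "e1 > 0" "ball y e1 \<subseteq> V" using Vo yV open_contains_ball by blast
    obtain e2 where e2: "e2 > 0" "\<forall>z\<in>Bdelta \<Omega> e2 y. t < \<phi> z" using lo yV VO ty by blast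
    have "ball y (min e1 e2) \<subseteq> W"
    proof
      fix z assume z: "z \<in> ball y (min e1 e2)"
      then have "z \<in> V" using e1 by auto
      moreover have "z \<in> Bdelta \<Omega> e2 y" using z \<open>z \<in> V\<close> VO by (auto simp: Bdelta_def)
      ultimately show "z \<in> W" using e2 by (auto simp: W_def)
    qed
    then show "\<exists>e>0. ball y e \<subseteq> W" using e1 e2 by (intro exI[of _ "min e1 e2"]) auto
  qed
  moreover have "W \<noteq> {}"
  proof
    assume "W = {}"
    have "V \<in> opsub V" using Vo Bdelta_center[OF x dp] by (auto simp: opsub_def V_def)
    then have "mm \<phi> V \<le> (SUP y\<in>V. \<phi> y)" by (rule mm_le)
    also have "\<dots> \<le> t" using \<open>W = {}\<close> by (auto simp: W_def intro!: SUP_least)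
    finally show False using t by (simp add: V_def)
  qed
  ultimately have "W \<in> opsub V" by (auto simp: opsub_def W_def)
  then have "mm (\<lambda>y. - hh y) V \<le> (SUP y\<in>W. - hh y)" by (rule mm_le)
  also have "\<dots> \<le> - t"
  proof (rule SUP_least)
    fix y assume "y \<in> W"
    then have "t < \<phi> y" "y \<in> \<Omega>" using VO by (auto simp: W_def)
    then have "t \<le> hh y" using le by (meson less_imp_le order_trans)
    then show "- hh y \<le> - t" by simp
  qed
  finally show "t \<le> - mm (\<lambda>y. - hh y) (Bdelta \<Omega> \<delta> x)"
    by (simp add: V_def ereal_le_neg_swap)
qed

lemma Psi_compat:
  assumes op: "open \<Omega>" and x: "x \<in> \<Omega>"
    and le: "\<forall>y\<in>\<Omega>. \<phi> y \<le> hh y"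
    and lo: "\<forall>y\<in>\<Omega>. \<forall>t<\<phi> y. \<exists>\<epsilon>>0. \<forall>z\<in>Bdelta \<Omega> \<epsilon> y. t < \<phi> z"
  shows "Psi \<Omega> \<phi> x \<le> - Psi \<Omega> (\<lambda>y. - hh y) x"
  unfolding Psi_def[of \<Omega> \<phi>]
proof (rule SUP_least)
  fix d1 :: real assume "d1 \<in> {0<..}"
  then have d1: "0 < d1" by simp
  have "Psi \<Omega> (\<lambda>y. - hh y) x \<le> - mm \<phi> (Bdelta \<Omega> d1 x)"
    unfolding Psi_def
  proof (rule SUP_least)
    fix d2 :: real assume "d2 \<in> {0<..}"
    then have d2: "0 < d2" by simp
    define d where "d = min d1 d2"
    have dp: "0 < d" using d1 d2 by (simp add: d_def)
    have "mm (\<lambda>y. - hh y) (Bdelta \<Omega> d2 x) \<le> mm (\<lambda>y. - hh y) (Bdelta \<Omega> d x)"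
      by (rule mm_antimono, rule Bdelta_mono) (simp add: d_def)
    also have "\<dots> \<le> - mm \<phi> (Bdelta \<Omega> d x)"
      using mm_compat[OF op x dp le lo] by (rule ereal_le_neg_swap)
    also have "\<dots> \<le> - mm \<phi> (Bdelta \<Omega> d1 x)"
    proof -
      have "mm \<phi> (Bdelta \<Omega> d1 x) \<le> mm \<phi> (Bdelta \<Omega> d x)"
        by (rule mm_antimono, rule Bdelta_mono) (simp add: d_def)
      then show ?thesis by simp
    qed
    finally show "mm (\<lambda>y. - hh y) (Bdelta \<Omega> d2 x) \<le> - mm \<phi> (Bdelta \<Omega> d1 x)" .
  qed
  then show "mm \<phi> (Bdelta \<Omega> d1 x) \<le> - Psi \<Omega> (\<lambda>y. - hh y) x"
    by (rule ereal_le_neg_swap)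
qed

lemma Inf_vals:
  assumes "\<forall>y\<in>D. fst (f y) \<le> snd (f y)"
  shows "Inf (vals D \<Omega> f \<delta> x) = (INF y\<in>Bdelta \<Omega> \<delta> x \<inter> D. fst (f y))"
proof (rule antisym)
  show "Inf (vals D \<Omega> f \<delta> x) \<le> (INF y\<in>Bdelta \<Omega> \<delta> x \<inter> D. fst (f y))"
  proof (rule INF_greatest)
    fix y assume "y \<in> Bdelta \<Omega> \<delta> x \<inter> D"
    then have "fst (f y) \<in> vals D \<Omega> f \<delta> x" using assms by (auto simp: vals_def)
    then show "Inf (vals D \<Omega> f \<delta> x) \<le> fst (f y)" by (rule Inf_lower)
  qed
  show "(INF y\<in>Bdelta \<Omega> \<delta> x \<inter> D. fst (f y)) \<le> Inf (vals D \<Omega> f \<delta> x)"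
    by (auto intro!: Inf_greatest simp: vals_def intro: INF_lower2)
qed

lemma Sup_vals:
  assumes "\<forall>y\<in>D. fst (f y) \<le> snd (f y)"
  shows "Sup (vals D \<Omega> f \<delta> x) = (SUP y\<in>Bdelta \<Omega> \<delta> x \<inter> D. snd (f y))"
proof (rule antisym)
  show "(SUP y\<in>Bdelta \<Omega> \<delta> x \<inter> D. snd (f y)) \<le> Sup (vals D \<Omega> f \<delta> x)"
  proof (rule SUP_least)
    fix y assume "y \<in> Bdelta \<Omega> \<delta> x \<inter> D"
    then have "snd (f y) \<in> vals D \<Omega> f \<delta> x" using assms by (auto simp: vals_def)
    then show "snd (f y) \<le> Sup (vals D \<Omega> f \<delta> x)" by (rule Sup_upper)
  qed
  show "Sup (vals D \<Omega> f \<delta> x) \<le> (SUP y\<in>Bdelta \<Omega> \<delta> x \<inter> D. snd (f y))"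
    by (auto intro!: Sup_least simp: vals_def intro: SUP_upper2)
qed

lemma I_env_eq:
  assumes "\<forall>y\<in>D. fst (f y) \<le> snd (f y)"
  shows "I_env D \<Omega> f x = lenv D \<Omega> (\<lambda>y. fst (f y)) x"
  unfolding I_env_def lenv_def using Inf_vals[OF assms] by simp

lemma S_env_eq:
  assumes "\<forall>y\<in>D. fst (f y) \<le> snd (f y)"
  shows "S_env D \<Omega> f x = - lenv D \<Omega> (\<lambda>y. - snd (f y)) x"
  unfolding S_env_def lenv_def using Sup_vals[OF assms]
  by (simp add: ereal_INF_uminus_eq ereal_SUP_uminus_eq)

lemma F_env_eq_iff:
  assumes f: "f \<in> ivl_funs \<Omega>" and D: "dense_in D \<Omega>"
  shows "F_env D \<Omega> f = f \<longleftrightarrow>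
    (\<forall>x\<in>\<Omega>. lenv D \<Omega> (\<lambda>y. fst (f y)) x = fst (f x) \<and> lenv D \<Omega> (\<lambda>y. - snd (f y)) x = - snd (f x))"
proof -
  have h: "\<forall>y\<in>D. fst (f y) \<le> snd (f y)" using f D by (auto simp: ivl_funs_def dense_in_def)
  have "F_env D \<Omega> f = f \<longleftrightarrow> (\<forall>x\<in>\<Omega>. (I_env D \<Omega> f x, S_env D \<Omega> f x) = f x)"
    using f by (auto simp: F_env_def ivl_funs_def fun_eq_iff)
  also have "\<dots> \<longleftrightarrow> (\<forall>x\<in>\<Omega>. lenv D \<Omega> (\<lambda>y. fst (f y)) x = fst (f x) \<and> lenv D \<Omega> (\<lambda>y. - snd (f y)) x = - snd (f x))"
    unfolding I_env_eq[OF h] S_env_eq[OF h]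
    by (auto simp: prod_eq_iff ereal_uminus_eq_reorder)
  finally show ?thesis .
qed

lemma Dcont_iff:
  "D_continuous \<Omega> f \<longleftrightarrow> f \<in> ivl_funs \<Omega> \<and> (\<lambda>y. fst (f y)) \<in> Lset \<Omega> \<and> (\<lambda>y. - snd (f y)) \<in> Lset \<Omega>"
  unfolding D_continuous_def Lset_def using F_env_eq_iff[of f \<Omega>] by auto

lemma lenv_cong:
  assumes "D \<subseteq> \<Omega>" "\<forall>y\<in>\<Omega>. g y = h y"
  shows "lenv D \<Omega> g x = lenv D \<Omega> h x"
  unfolding lenv_def using assms Bdelta_sub
  by (intro SUP_cong refl INF_cong) blast+

lemma Lset_cong:
  assumes "g \<in> Lset \<Omega>" "\<forall>y\<in>\<Omega>. g y = h y"
  shows "h \<in> Lset \<Omega>"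
  using assms lenv_cong[of _ \<Omega> g h] unfolding Lset_def dense_in_def by auto

lemma G_sup:
  assumes op: "open \<Omega>" and S: "S \<subseteq> G_set \<Omega>"
  shows "\<exists>s. is_sup_in (ivl_le \<Omega>) (G_set \<Omega>) S s"
proof -
  define \<phi> where "\<phi> y = (SUP f\<in>S. fst (f y))" for y
  define hh where "hh y = (SUP f\<in>S. snd (f y))" for y
  define s where "s x = (if x \<in> \<Omega> then (Psi \<Omega> \<phi> x, - Psi \<Omega> (\<lambda>y. - hh y) x) else undefined)" for x
  have Sf: "f \<in> ivl_funs \<Omega>" "(\<lambda>y. fst (f y)) \<in> Lset \<Omega>" "(\<lambda>y. - snd (f y)) \<in> Lset \<Omega>"
    if "f \<in> S" for f using S that by (auto simp: G_set_def Dcont_iff)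
  have le: "\<forall>y\<in>\<Omega>. \<phi> y \<le> hh y"
    unfolding \<phi>_def hh_def using Sf(1) by (auto intro!: SUP_mono simp: ivl_funs_def)
  have lo: "\<forall>y\<in>\<Omega>. \<forall>t<\<phi> y. \<exists>\<epsilon>>0. \<forall>z\<in>Bdelta \<Omega> \<epsilon> y. t < \<phi> z"
  proof (intro ballI allI impI)
    fix y t assume y: "y \<in> \<Omega>" and t: "t < \<phi> y"
    then obtain f where f: "f \<in> S" and tf: "t < fst (f y)" unfolding \<phi>_def by (auto simp: less_SUP_iff)
    have "lenv \<Omega> \<Omega> (\<lambda>y. fst (f y)) y = fst (f y)" using Sf(2)[OF f] y by (rule Lset_self)
    with tf have "t < (SUP \<delta>\<in>{0<..}. INF z\<in>Bdelta \<Omega> \<delta> y \<inter> \<Omega>. fst (f z))"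
      unfolding lenv_def by simp
    then obtain \<epsilon> where ep: "\<epsilon> > 0" and ti: "t < (INF z\<in>Bdelta \<Omega> \<epsilon> y \<inter> \<Omega>. fst (f z))"
      unfolding less_SUP_iff by auto
    have "\<forall>z\<in>Bdelta \<Omega> \<epsilon> y. t < \<phi> z"
    proof
      fix z assume z: "z \<in> Bdelta \<Omega> \<epsilon> y"
      then have zz: "z \<in> Bdelta \<Omega> \<epsilon> y \<inter> \<Omega>" using Bdelta_sub by blast
      have "t < fst (f z)" using ti INF_lower[OF zz, of "\<lambda>z. fst (f z)"] by simp
      also have "\<dots> \<le> \<phi> z" unfolding \<phi>_def using f by (rule SUP_upper)
      finally show "t < \<phi> z" .
    qed
    then show "\<exists>\<epsilon>>0. \<forall>z\<in>Bdelta \<Omega> \<epsilon> y. t < \<phi> z" using ep by blast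
  qed
  have sG: "s \<in> G_set \<Omega>"
    unfolding G_set_def mem_Collect_eq Dcont_iff
  proof (intro conjI)
    show "s \<in> ivl_funs \<Omega>"
      unfolding ivl_funs_def s_def using Psi_compat[OF op _ le lo] by auto
    show "(\<lambda>y. fst (s y)) \<in> Lset \<Omega>"
      by (rule Lset_cong[OF Psi_Lset[OF op, of \<phi>]]) (auto simp: s_def)
    show "(\<lambda>y. - snd (s y)) \<in> Lset \<Omega>"
      by (rule Lset_cong[OF Psi_Lset[OF op, of "\<lambda>y. - hh y"]]) (auto simp: s_def)
  qed
  have ub: "ivl_le \<Omega> f s" if f: "f \<in> S" for f
    unfolding ivl_le_def
  proof (intro ballI conjI)
    fix x assume x: "x \<in> \<Omega>"
    have "fst (f x) \<le> Psi \<Omega> \<phi> x"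
      by (rule Psi_lower[OF Sf(2)[OF f] _ x]) (auto simp: \<phi>_def intro: SUP_upper f)
    then show "fst (f x) \<le> fst (s x)" using x by (simp add: s_def)
    have "Psi \<Omega> (\<lambda>y. - hh y) x \<le> - snd (f x)"
      by (rule Psi_upper[OF op Sf(3)[OF f] _ x]) (auto simp: hh_def intro: SUP_upper f)
    then show "snd (f x) \<le> snd (s x)" using x by (simp add: s_def ereal_le_neg_swap)
  qed
  have least: "ivl_le \<Omega> s u" if u: "u \<in> G_set \<Omega>" and uu: "\<forall>f\<in>S. ivl_le \<Omega> f u" for u
    unfolding ivl_le_def
  proof (intro ballI conjI)
    fix x assume x: "x \<in> \<Omega>"
    have U: "(\<lambda>y. fst (u y)) \<in> Lset \<Omega>" "(\<lambda>y. - snd (u y)) \<in> Lset \<Omega>"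
      using u by (auto simp: G_set_def Dcont_iff)
    have "Psi \<Omega> \<phi> x \<le> fst (u x)"
      by (rule Psi_upper[OF op U(1) _ x]) (use uu in \<open>auto simp: \<phi>_def ivl_le_def intro!: SUP_least\<close>)
    then show "fst (s x) \<le> fst (u x)" using x by (simp add: s_def)
    have "- snd (u x) \<le> Psi \<Omega> (\<lambda>y. - hh y) x"
      by (rule Psi_lower[OF U(2) _ x]) (use uu in \<open>auto simp: hh_def ivl_le_def intro!: SUP_least\<close>)
    then show "snd (s x) \<le> snd (u x)" using x by (simp add: s_def ereal_uminus_le_reorder)
  qed
  show ?thesis unfolding is_sup_in_def using sG ub least by blast
qed

lemma G_inf:
  assumes op: "open \<Omega>" and S: "S \<subseteq> G_set \<Omega>"
  shows "\<exists>s. is_inf_in (ivl_le \<Omega>) (G_set \<Omega>) S s"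
proof -
  define L where "L = {u \<in> G_set \<Omega>. \<forall>f\<in>S. ivl_le \<Omega> u f}"
  obtain s where s: "is_sup_in (ivl_le \<Omega>) (G_set \<Omega>) L s" using G_sup[OF op, of L] by (auto simp: L_def)
  have "is_inf_in (ivl_le \<Omega>) (G_set \<Omega>) S s"
    using s S unfolding is_sup_in_def is_inf_in_def L_def by blast
  then show ?thesis by blast
qed

lemma ded_sub:
  assumes op: "open \<Omega>"
    and sand: "\<And>a b s. a \<in> G_set \<Omega> \<Longrightarrow> b \<in> G_set \<Omega> \<Longrightarrow> s \<in> G_set \<Omega> \<Longrightarrow> Q a \<Longrightarrow> Q b
       \<Longrightarrow> ivl_le \<Omega> a s \<Longrightarrow> ivl_le \<Omega> s b \<Longrightarrow> Q s"
  shows "dedekind_complete (ivl_le \<Omega>) {f \<in> G_set \<Omega>. Q f}"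
  unfolding dedekind_complete_def
proof (intro conjI allI impI)
  fix S assume A: "S \<subseteq> {f \<in> G_set \<Omega>. Q f} \<and> S \<noteq> {} \<and> (\<exists>u\<in>{f \<in> G_set \<Omega>. Q f}. \<forall>f\<in>S. ivl_le \<Omega> f u)"
  then obtain u f0 where u: "u \<in> G_set \<Omega>" "Q u" "\<forall>f\<in>S. ivl_le \<Omega> f u" and f0: "f0 \<in> S" by blast
  have SG: "S \<subseteq> G_set \<Omega>" using A by blast
  obtain s where s: "is_sup_in (ivl_le \<Omega>) (G_set \<Omega>) S s" using G_sup[OF op SG] by blast
  have "Q s"
    by (rule sand[of f0 u s]) (use A u f0 s in \<open>auto simp: is_sup_in_def\<close>)
  then show "\<exists>s. is_sup_in (ivl_le \<Omega>) {f \<in> G_set \<Omega>. Q f} S s"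
    using s unfolding is_sup_in_def by blast
next
  fix S assume A: "S \<subseteq> {f \<in> G_set \<Omega>. Q f} \<and> S \<noteq> {} \<and> (\<exists>u\<in>{f \<in> G_set \<Omega>. Q f}. \<forall>f\<in>S. ivl_le \<Omega> u f)"
  then obtain u f0 where u: "u \<in> G_set \<Omega>" "Q u" "\<forall>f\<in>S. ivl_le \<Omega> u f" and f0: "f0 \<in> S" by blast
  have SG: "S \<subseteq> G_set \<Omega>" using A by blast
  obtain s where s: "is_inf_in (ivl_le \<Omega>) (G_set \<Omega>) S s" using G_inf[OF op SG] by blast
  have "Q s"
    by (rule sand[of u f0 s]) (use A u f0 s in \<open>auto simp: is_inf_in_def\<close>)
  then show "\<exists>s. is_inf_in (ivl_le \<Omega>) {f \<in> G_set \<Omega>. Q f} S s"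
    using s unfolding is_inf_in_def by blast
qed

lemma sand_bounded:
  assumes "ivl_bounded \<Omega> a" "ivl_bounded \<Omega> b" "ivl_le \<Omega> a s" "ivl_le \<Omega> s b"
  shows "ivl_bounded \<Omega> s"
proof -
  obtain M1 M2 :: real where M1: "\<forall>x\<in>\<Omega>. - ereal M1 \<le> fst (a x) \<and> snd (a x) \<le> ereal M1"
    and M2: "\<forall>x\<in>\<Omega>. - ereal M2 \<le> fst (b x) \<and> snd (b x) \<le> ereal M2"
    using assms(1,2) by (auto simp: ivl_bounded_def)
  have "\<forall>x\<in>\<Omega>. - ereal (max M1 M2) \<le> fst (s x) \<and> snd (s x) \<le> ereal (max M1 M2)"
  proof
    fix x assume x: "x \<in> \<Omega>"
    have "- ereal (max M1 M2) \<le> - ereal M1" by (simp only: uminus_ereal.simps ereal_less_eq(3))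
    also have "\<dots> \<le> fst (a x)" using M1 x by auto
    also have "\<dots> \<le> fst (s x)" using assms(3) x by (auto simp: ivl_le_def)
    finally have 1: "- ereal (max M1 M2) \<le> fst (s x)" .
    have "snd (s x) \<le> snd (b x)" using assms(4) x by (auto simp: ivl_le_def)
    also have "\<dots> \<le> ereal M2" using M2 x by auto
    also have "\<dots> \<le> ereal (max M1 M2)" by simp
    finally show "- ereal (max M1 M2) \<le> fst (s x) \<and> snd (s x) \<le> ereal (max M1 M2)" using 1 by simp
  qed
  then show ?thesis unfolding ivl_bounded_def by blast
qed

lemma finite_ivl_sand:
  assumes "finite_ivl p" "finite_ivl q" "fst p \<le> fst r" "snd r \<le> snd q" "fst r \<le> snd r"
  shows "finite_ivl r"
proof -
  have "fst p \<noteq> -\<infinity>" "snd q \<noteq> \<infinity>" using assms(1,2) by (auto simp: finite_ivl_def)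
  then have "fst r \<noteq> -\<infinity>" "snd r \<noteq> \<infinity>" "fst r \<noteq> \<infinity>" "snd r \<noteq> -\<infinity>"
    using assms(3-5) by (metis ereal_infty_less_eq(1) ereal_infty_less_eq(2) order_trans)+
  then show ?thesis unfolding finite_ivl_def by auto
qed

lemma sand_finite:
  assumes "s \<in> G_set \<Omega>" "ivl_finite \<Omega> a" "ivl_finite \<Omega> b" "ivl_le \<Omega> a s" "ivl_le \<Omega> s b"
  shows "ivl_finite \<Omega> s"
  using assms unfolding ivl_finite_def ivl_le_def
  by (auto simp: G_set_def Dcont_iff ivl_funs_def intro: finite_ivl_sand)

lemma sand_nf:
  assumes "s \<in> G_set \<Omega>" "ivl_nearly_finite \<Omega> a" "ivl_nearly_finite \<Omega> b" "ivl_le \<Omega> a s" "ivl_le \<Omega> s b"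
  shows "ivl_nearly_finite \<Omega> s"
proof -
  obtain D1 D2 where D1: "open D1" "dense_in D1 \<Omega>" "\<forall>x\<in>D1. finite_ivl (a x)"
    and D2: "open D2" "dense_in D2 \<Omega>" "\<forall>x\<in>D2. finite_ivl (b x)"
    using assms(2,3) by (auto simp: ivl_nearly_finite_def)
  have "dense_in (D1 \<inter> D2) \<Omega>"
    unfolding dense_in_def
  proof
    show "D1 \<inter> D2 \<subseteq> \<Omega>" using D1 by (auto simp: dense_in_def)
    have "D1 \<subseteq> closure (D1 \<inter> D2)"
      using open_Int_closure_subset[OF D1(1), of D2] D1(2) D2(2) by (auto simp: dense_in_def)
    then have "closure D1 \<subseteq> closure (D1 \<inter> D2)" by (simp add: closure_minimal)
    then show "\<Omega> \<subseteq> closure (D1 \<inter> D2)" using D1(2) by (auto simp: dense_in_def)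
  qed
  moreover have "\<forall>x\<in>D1 \<inter> D2. finite_ivl (s x)"
  proof
    fix x assume x: "x \<in> D1 \<inter> D2"
    then have xO: "x \<in> \<Omega>" using D1(2) by (auto simp: dense_in_def)
    show "finite_ivl (s x)"
      by (rule finite_ivl_sand[of "a x" "b x"])
        (use x xO D1 D2 assms(1,4,5) in \<open>auto simp: ivl_le_def G_set_def Dcont_iff ivl_funs_def\<close>)
  qed
  ultimately show ?thesis unfolding ivl_nearly_finite_def using D1(1) D2(1) by blast
qed

theorem theorem15:
  fixes \<Omega> :: "(real ^ 'n) set"
  assumes "open \<Omega>"
  shows "order_complete (ivl_le \<Omega>) (G_set \<Omega>)
    \<and> dedekind_complete (ivl_le \<Omega>) {f \<in> G_set \<Omega>. ivl_bounded \<Omega> f}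
    \<and> dedekind_complete (ivl_le \<Omega>) {f \<in> G_set \<Omega>. ivl_finite \<Omega> f}
    \<and> dedekind_complete (ivl_le \<Omega>) {f \<in> G_set \<Omega>. ivl_nearly_finite \<Omega> f}"
proof (intro conjI)
  show "order_complete (ivl_le \<Omega>) (G_set \<Omega>)"
    unfolding order_complete_def using G_sup[OF assms] G_inf[OF assms] by blast
  show "dedekind_complete (ivl_le \<Omega>) {f \<in> G_set \<Omega>. ivl_bounded \<Omega> f}"
    by (rule ded_sub[OF assms]) (rule sand_bounded)
  show "dedekind_complete (ivl_le \<Omega>) {f \<in> G_set \<Omega>. ivl_finite \<Omega> f}"
    by (rule ded_sub[OF assms]) (rule sand_finite)
  show "dedekind_complete (ivl_le \<Omega>) {f \<in> G_set \<Omega>. ivl_nearly_finite \<Omega> f}"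
    by (rule ded_sub[OF assms]) (rule sand_nf)
qed

end
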